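(* Let $Y\subseteq\Omega$, $L\in\mathcal{I}^{\mathbf{c}}(Y)$ and $e\in\max(Y)-L$, and let $k=|\langle\{e\}\rangle_Y|$. Then $$\pi(Y,L)-\pi(Y,L\cup\{e\})=(\eta_{(e)}+1_K)\Big(\prod_{i\in\langle\{e\}\rangle_Y-\{e\}}\tau_{(i)}\Big)x^{k}\,\pi(Y-\langle\{e\}\rangle_Y,L).$$
   Context: $\Omega$ is a finite set and $\mathbf{P}=(\Omega,\preccurlyeq_{\mathbf{P}})$ a poset. For $Y\subseteq\Omega$: $\max(Y)$ is the set of maximal elements of $Y$ w.r.t. $\preccurlyeq_{\mathbf{P}}$; $\mathcal{I}(Y)$ is the set of down-closed subsets of $Y$ (induced order); $\mathcal{I}^{\mathbf{c}}(Y)$ is the set of up-closed subsets of $Y$; for $A\subseteq Y$, $\langle A\rangle_Y=\{y\in Y:\exists a\in A, y\preccurlyeq_{\mathbf{P}}a\}$. $K$ is a commutative ring, $\tau,\eta\in K^{\Omega}$. For $D,I\subseteq\Omega$, $\varphi(D,I)=(-1)^{|I\cap D|}\big(\prod_{i\in I-\max(I)}\tau_{(i)}\big)\big(\prod_{i\in\max(I)-D}\eta_{(i)}\big)$ if $I\cap D\subseteq\max(I)$, and $0$ otherwise; for $D\subseteq Y\subseteq\Omega$, $\pi(Y,D)=\sum_{I\in\mathcal{I}(Y)}\varphi(D,I)x^{|I|}\in K[x]$. *)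

theory Defs
  imports "HOL-Computational_Algebra.Polynomial"
begin

text \<open>The poset order is a relation P (set of pairs), (a,b) in P meaning a below-or-equal b.\<close>

definition maxel :: "('a \<times> 'a) set \<Rightarrow> 'a set \<Rightarrow> 'a set" where
  "maxel P Y = {y \<in> Y. \<forall>z \<in> Y. (y, z) \<in> P \<longrightarrow> z = y}"

definition downsets :: "('a \<times> 'a) set \<Rightarrow> 'a set \<Rightarrow> 'a set set" where
  "downsets P Y = {I. I \<subseteq> Y \<and> (\<forall>i \<in> I. \<forall>y \<in> Y. (y, i) \<in> P \<longrightarrow> y \<in> I)}"

definition upsets :: "('a \<times> 'a) set \<Rightarrow> 'a set \<Rightarrow> 'a set set" where
  "upsets P Y = {I. I \<subseteq> Y \<and> (\<forall>i \<in> I. \<forall>y \<in> Y. (i, y) \<in> P \<longrightarrow> y \<in> I)}"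

definition downclosure :: "('a \<times> 'a) set \<Rightarrow> 'a set \<Rightarrow> 'a set \<Rightarrow> 'a set" where
  "downclosure P Y A = {y \<in> Y. \<exists>a \<in> A. (y, a) \<in> P}"

definition phi :: "('a \<times> 'a) set \<Rightarrow> ('a \<Rightarrow> 'k::comm_ring_1) \<Rightarrow> ('a \<Rightarrow> 'k) \<Rightarrow> 'a set \<Rightarrow> 'a set \<Rightarrow> 'k" where
  "phi P \<tau> \<eta> D I =
     (if I \<inter> D \<subseteq> maxel P I
      then (-1) ^ card (I \<inter> D) * (\<Prod>i \<in> I - maxel P I. \<tau> i) * (\<Prod>i \<in> maxel P I - D. \<eta> i)
      else 0)"

definition pipoly :: "('a \<times> 'a) set \<Rightarrow> ('a \<Rightarrow> 'k::comm_ring_1) \<Rightarrow> ('a \<Rightarrow> 'k) \<Rightarrow> 'a set \<Rightarrow> 'a set \<Rightarrow> 'k poly" where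
  "pipoly P \<tau> \<eta> Y D = (\<Sum>I \<in> downsets P Y. monom (phi P \<tau> \<eta> D I) (card I))"

end

theory Submission
  imports Defs
begin

theorem proposition3p1:
  fixes \<Omega> :: "'a set" and P :: "('a \<times> 'a) set"
    and \<tau> \<eta> :: "'a \<Rightarrow> 'k::comm_ring_1"
    and Y L :: "'a set" and e :: 'a and k :: nat
  assumes "finite \<Omega>"
    and "partial_order_on \<Omega> P"
    and "Y \<subseteq> \<Omega>"
    and "L \<in> upsets P Y"
    and "e \<in> maxel P Y - L"
    and "k = card (downclosure P Y {e})"
  shows "pipoly P \<tau> \<eta> Y L - pipoly P \<tau> \<eta> Y (L \<union> {e}) =
         monom ((\<eta> e + 1) * (\<Prod>i \<in> downclosure P Y {e} - {e}. \<tau> i)) k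
           * pipoly P \<tau> \<eta> (Y - downclosure P Y {e}) L"
proof -
  define E where "E = downclosure P Y {e}"
  define c where "c = (\<eta> e + 1) * (\<Prod>i \<in> E - {e}. \<tau> i)"
  have finY: "finite Y" using assms(1,3) finite_subset by blast
  have refl: "\<And>x. x \<in> \<Omega> \<Longrightarrow> (x, x) \<in> P" using assms(2)
    unfolding partial_order_on_def preorder_on_def refl_on_def by blast
  have trans: "\<And>x y z. (x, y) \<in> P \<Longrightarrow> (y, z) \<in> P \<Longrightarrow> (x, z) \<in> P" using assms(2)
    unfolding partial_order_on_def preorder_on_def by (meson transE)
  have eY: "e \<in> Y" and emax: "\<And>z. z \<in> Y \<Longrightarrow> (e, z) \<in> P \<Longrightarrow> z = e" and eL: "e \<notin> L"
    using assms(5) unfolding maxel_def by auto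
  have LY: "L \<subseteq> Y" and Lup: "\<And>i y. i \<in> L \<Longrightarrow> y \<in> Y \<Longrightarrow> (i, y) \<in> P \<Longrightarrow> y \<in> L"
    using assms(4) unfolding upsets_def by auto
  have E_def': "E = {y \<in> Y. (y, e) \<in> P}" unfolding E_def downclosure_def by auto
  have eE: "e \<in> E" using eY refl assms(3) E_def' by auto
  have EY: "E \<subseteq> Y" using E_def' by auto
  have EL: "E \<inter> L = {}" using Lup eL eY E_def' by auto
  have finE: "finite E" using EY finY finite_subset by blast
  have Edown: "E \<in> downsets P Y" unfolding downsets_def E_def' using trans by blast
  have zero: "phi P \<tau> \<eta> L I - phi P \<tau> \<eta> (L \<union> {e}) I = 0" if "e \<notin> I" for I
  proof -
    have "I \<inter> (L \<union> {e}) = I \<inter> L" "maxel P I - (L \<union> {e}) = maxel P I - L"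
      using that unfolding maxel_def by auto
    then show ?thesis unfolding phi_def by simp
  qed
  have key: "phi P \<tau> \<eta> L (E \<union> J) - phi P \<tau> \<eta> (L \<union> {e}) (E \<union> J) = c * phi P \<tau> \<eta> L J"
    if J: "J \<in> downsets P (Y - E)" for J
  proof -
    have JY: "J \<subseteq> Y - E" using J unfolding downsets_def by auto
    have finJ: "finite J" using JY finY finite_subset by blast
    have eJ: "e \<notin> J" using JY eE by auto
    have mx: "maxel P (E \<union> J) = insert e (maxel P J)"
    proof (intro set_eqI iffI)
      fix x assume x: "x \<in> maxel P (E \<union> J)"
      show "x \<in> insert e (maxel P J)"
      proof (cases "x \<in> E")
        case True
        then have "(x, e) \<in> P" using E_def' by auto
        then show ?thesis using x eE unfolding maxel_def by auto
      next
        case False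
        then show ?thesis using x unfolding maxel_def by auto
      qed
    next
      fix x assume x: "x \<in> insert e (maxel P J)"
      show "x \<in> maxel P (E \<union> J)"
      proof (cases "x = e")
        case True
        then show ?thesis using eE emax EY JY unfolding maxel_def by auto
      next
        case False
        then have xJ: "x \<in> J" and xm: "\<forall>z\<in>J. (x, z) \<in> P \<longrightarrow> z = x"
          using x unfolding maxel_def by auto
        have "(x, z) \<notin> P" if "z \<in> E" for z
        proof
          assume "(x, z) \<in> P"
          moreover have "(z, e) \<in> P" using that E_def' by auto
          ultimately have "(x, e) \<in> P" using trans by blast
          then have "x \<in> E" using xJ JY E_def' by auto
          then show False using xJ JY by auto
        qed
        then show ?thesis using xJ xm unfolding maxel_def by auto
      qed
    qed
    have mJ: "maxel P J \<subseteq> J" unfolding maxel_def by auto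
    have i1: "(E \<union> J) \<inter> L = J \<inter> L" using EL by auto
    have i2: "(E \<union> J) \<inter> (L \<union> {e}) = insert e (J \<inter> L)" using eE EL by auto
    have d1: "(E \<union> J) - maxel P (E \<union> J) = (E - {e}) \<union> (J - maxel P J)"
      using mx mJ JY eE by auto
    have d2: "maxel P (E \<union> J) - L = insert e (maxel P J - L)" using mx eL by auto
    have d3: "maxel P (E \<union> J) - (L \<union> {e}) = maxel P J - L" using mx mJ eJ by auto
    have pt: "(\<Prod>i \<in> (E - {e}) \<union> (J - maxel P J). \<tau> i)
        = (\<Prod>i \<in> E - {e}. \<tau> i) * (\<Prod>i \<in> J - maxel P J. \<tau> i)"
      by (rule prod.union_disjoint) (use finE finJ JY in auto)
    have pe: "(\<Prod>i \<in> insert e (maxel P J - L). \<eta> i) = \<eta> e * (\<Prod>i \<in> maxel P J - L. \<eta> i)"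
      using finJ mJ eJ by (subst prod.insert) (auto intro: finite_subset)
    have cJL: "card (insert e (J \<inter> L)) = Suc (card (J \<inter> L))" using finJ eJ by simp
    have cond: "(insert e (J \<inter> L) \<subseteq> insert e (maxel P J)) = (J \<inter> L \<subseteq> maxel P J)"
      using eJ by auto
    show ?thesis
    proof (cases "J \<inter> L \<subseteq> maxel P J")
      case True
      then show ?thesis unfolding phi_def i1 i2 mx[symmetric] d1 d2 d3 pt pe cJL c_def
        using cond mx by (simp add: algebra_simps)
    next
      case False
      then show ?thesis unfolding phi_def i1 i2 using cond mx by simp
    qed
  qed
  have cardEJ: "card (E \<union> J) = k + card J" if J: "J \<in> downsets P (Y - E)" for J
  proof -
    have JY: "J \<subseteq> Y - E" using J unfolding downsets_def by auto
    have finJ: "finite J" using JY finY finite_subset by blast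
    show ?thesis using assms(6) E_def JY finE finJ by (subst card_Un_disjoint) auto
  qed
  have inj: "inj_on (\<lambda>J. E \<union> J) (downsets P (Y - E))"
    unfolding inj_on_def downsets_def by blast
  have img: "(\<lambda>J. E \<union> J) ` downsets P (Y - E) = {I \<in> downsets P Y. e \<in> I}"
  proof (intro set_eqI iffI)
    fix I assume "I \<in> (\<lambda>J. E \<union> J) ` downsets P (Y - E)"
    then obtain J where J: "J \<in> downsets P (Y - E)" and I: "I = E \<union> J" by blast
    have "E \<union> J \<in> downsets P Y"
      using J Edown unfolding downsets_def by blast
    then show "I \<in> {I \<in> downsets P Y. e \<in> I}" using I eE by auto
  next
    fix I assume "I \<in> {I \<in> downsets P Y. e \<in> I}"
    then have I: "I \<in> downsets P Y" and eI: "e \<in> I" by auto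
    have EI: "E \<subseteq> I" using I eI unfolding downsets_def E_def' by auto
    have "I - E \<in> downsets P (Y - E)" using I unfolding downsets_def by auto
    moreover have "I = E \<union> (I - E)" using EI by auto
    ultimately show "I \<in> (\<lambda>J. E \<union> J) ` downsets P (Y - E)" by blast
  qed
  have finD: "finite (downsets P Y)" unfolding downsets_def using finY by simp
  have "pipoly P \<tau> \<eta> Y L - pipoly P \<tau> \<eta> Y (L \<union> {e})
      = (\<Sum>I \<in> downsets P Y. monom (phi P \<tau> \<eta> L I - phi P \<tau> \<eta> (L \<union> {e}) I) (card I))"
    unfolding pipoly_def sum_subtractf[symmetric] by (simp add: diff_monom)
  also have "\<dots> = (\<Sum>I \<in> {I \<in> downsets P Y. e \<in> I}. monom (phi P \<tau> \<eta> L I - phi P \<tau> \<eta> (L \<union> {e}) I) (card I))"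
    using finD zero by (intro sum.mono_neutral_right) auto
  also have "\<dots> = (\<Sum>J \<in> downsets P (Y - E). monom (phi P \<tau> \<eta> L (E \<union> J) - phi P \<tau> \<eta> (L \<union> {e}) (E \<union> J)) (card (E \<union> J)))"
    unfolding img[symmetric] by (subst sum.reindex[OF inj]) simp
  also have "\<dots> = (\<Sum>J \<in> downsets P (Y - E). monom c k * monom (phi P \<tau> \<eta> L J) (card J))"
    proof (rule sum.cong[OF HOL.refl])
    fix J assume J: "J \<in> downsets P (Y - E)"
    show "monom (phi P \<tau> \<eta> L (E \<union> J) - phi P \<tau> \<eta> (L \<union> {e}) (E \<union> J)) (card (E \<union> J))
        = monom c k * monom (phi P \<tau> \<eta> L J) (card J)"
      unfolding key[OF J] cardEJ[OF J] mult_monom ..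
  qed
  also have "\<dots> = monom c k * pipoly P \<tau> \<eta> (Y - E) L"
    unfolding pipoly_def by (simp add: sum_distrib_left)
  finally show ?thesis unfolding c_def E_def .
qed

end
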